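(* Let $\mathbf w=(w_n)_{n\ge1}$ be a weight sequence such that there exists $C>0$ with $w_{mn}\le Cw_mw_n$ for all $m,n\in\mathbb N$. Then for every $p\ge1$ and all $\alpha,\beta\in\ell_{\mathbf w,p}$, $$\|\alpha\otimes\beta\|_{\mathbf w,p}\le C^{1/p}\|\alpha\|_{\mathbf w,p}\|\beta\|_{\mathbf w,p}.$$ In particular, $\ell_{\mathbf w,p}$ is a stable Calkin space.
   Context: A weight sequence is a non-increasing sequence $\mathbf w$ of positive numbers with $w_1=1$, $w_n\to0$ and $\sum_nw_n=\infty$. For $1\le p<\infty$, the Lorentz sequence space $\ell_{\mathbf w,p}$ is the space of complex sequences $\alpha$ with $\|\alpha\|_{\mathbf w,p}=\sup_\pi(\sum_n w_n|\alpha_{\pi(n)}|^p)^{1/p}<\infty$, sup over permutations $\pi$ of $\mathbb N$ (equivalently $(\sum_nw_n(\alpha^\star_n)^p)^{1/p}$, with $\alpha^\star$ the non-increasing rearrangement of $(|\alpha_n|)$). For null sequences $\alpha,\beta$, $\alpha\otimes\beta$ is the non-increasing rearrangement with multiplicities of $(|\alpha_i\beta_j|)_{i,j}$. A Calkin space is a linear subspace $\mathfrak i$ of the null sequences $c_0$ such that $\alpha\in\mathfrak i,\beta\in c_0,\beta^\star\le\alpha^\star$ imply $\beta\in\mathfrak i$; it is stable if the smallest Calkin space containing all $\alpha\otimes\beta$, $\alpha,\beta\in\mathfrak i$, equals $\mathfrak i$. *)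

theory Defs
  imports "HOL-Analysis.Analysis"
begin

text \<open>Weights are indexed from 1 (the value w 0 is irrelevant); sequences
  of numbers are indexed from 0, so the n-th term (1-based) of alpha is alpha (n-1).\<close>

definition weight_seq :: "(nat \<Rightarrow> real) \<Rightarrow> bool" where
  "weight_seq w \<longleftrightarrow> w 1 = 1 \<and> (\<forall>n\<ge>1. 0 < w n) \<and> (\<forall>n\<ge>1. w (Suc n) \<le> w n)
     \<and> (\<lambda>n. w (Suc n)) \<longlonglongrightarrow> 0 \<and> \<not> summable (\<lambda>n. w (Suc n))"

definition lorentz_pow :: "(nat \<Rightarrow> real) \<Rightarrow> real \<Rightarrow> (nat \<Rightarrow> complex) \<Rightarrow> ennreal" where
  "lorentz_pow w p \<alpha> =
     (SUP \<pi> \<in> {\<pi> :: nat \<Rightarrow> nat. bij \<pi>}. \<Sum>n. ennreal (w (Suc n) * norm (\<alpha> (\<pi> n)) powr p))"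

definition lorentz_space :: "(nat \<Rightarrow> real) \<Rightarrow> real \<Rightarrow> (nat \<Rightarrow> complex) set" where
  "lorentz_space w p = {\<alpha>. lorentz_pow w p \<alpha> < \<infinity>}"

definition lorentz_norm :: "(nat \<Rightarrow> real) \<Rightarrow> real \<Rightarrow> (nat \<Rightarrow> complex) \<Rightarrow> real" where
  "lorentz_norm w p \<alpha> = enn2real (lorentz_pow w p \<alpha>) powr (1 / p)"

text \<open>Non-increasing rearrangement (with multiplicities) of a nonnegative null family,
  0-indexed: f*(n) = inf { t \<ge> 0 : #{i. f i > t} \<le> n }.\<close>
definition decr_rearr :: "('i \<Rightarrow> real) \<Rightarrow> nat \<Rightarrow> real" where
  "decr_rearr f n = Inf {t. 0 \<le> t \<and> finite {i. t < f i} \<and> card {i. t < f i} \<le> n}"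

definition null_seqs :: "(nat \<Rightarrow> complex) set" where
  "null_seqs = {\<alpha>. \<alpha> \<longlonglongrightarrow> 0}"

definition star :: "(nat \<Rightarrow> complex) \<Rightarrow> nat \<Rightarrow> real" where
  "star \<alpha> = decr_rearr (\<lambda>n. norm (\<alpha> n))"

definition tensor :: "(nat \<Rightarrow> complex) \<Rightarrow> (nat \<Rightarrow> complex) \<Rightarrow> nat \<Rightarrow> complex" where
  "tensor \<alpha> \<beta> = (\<lambda>n. complex_of_real (decr_rearr (\<lambda>(i, j). norm (\<alpha> i) * norm (\<beta> j)) n))"

definition calkin_space :: "(nat \<Rightarrow> complex) set \<Rightarrow> bool" where
  "calkin_space I \<longleftrightarrow> I \<subseteq> null_seqs \<and> (\<lambda>n. 0) \<in> I
     \<and> (\<forall>\<alpha>\<in>I. \<forall>\<beta>\<in>I. (\<lambda>n. \<alpha> n + \<beta> n) \<in> I)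
     \<and> (\<forall>c. \<forall>\<alpha>\<in>I. (\<lambda>n. c * \<alpha> n) \<in> I)
     \<and> (\<forall>\<alpha>\<in>I. \<forall>\<beta>\<in>null_seqs. (\<forall>n. star \<beta> n \<le> star \<alpha> n) \<longrightarrow> \<beta> \<in> I)"

definition calkin_hull :: "(nat \<Rightarrow> complex) set \<Rightarrow> (nat \<Rightarrow> complex) set" where
  "calkin_hull S = \<Inter> {J. calkin_space J \<and> S \<subseteq> J}"

definition stable_calkin :: "(nat \<Rightarrow> complex) set \<Rightarrow> bool" where
  "stable_calkin I \<longleftrightarrow> calkin_space I \<and>
     calkin_hull {tensor \<alpha> \<beta> | \<alpha> \<beta>. \<alpha> \<in> I \<and> \<beta> \<in> I} = I"

end

theory Submission
  imports Defs
begin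


definition WW :: "(nat \<Rightarrow> real) \<Rightarrow> nat \<Rightarrow> real" where
  "WW w m = (\<Sum>n<m. w (Suc n))"

locale wseq =
  fixes w :: "nat \<Rightarrow> real"
  assumes wpos: "\<And>n. n \<ge> 1 \<Longrightarrow> 0 < w n"
    and wdec: "\<And>n. n \<ge> 1 \<Longrightarrow> w (Suc n) \<le> w n"
begin

lemma wanti: assumes "1 \<le> a" "a \<le> b" shows "w b \<le> w a"
  using assms(2)
proof (induction b rule: dec_induct)
  case base then show ?case by simp
next
  case (step n) then show ?case using wdec[of n] assms(1) by linarith
qed

lemma WW_mono: "m \<le> m' \<Longrightarrow> WW w m \<le> WW w m'"
  unfolding WW_def by (rule sum_mono2) (auto intro: less_imp_le[OF wpos])

lemma WW_nonneg: "0 \<le> WW w m"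
  unfolding WW_def by (rule sum_nonneg) (auto intro: less_imp_le[OF wpos])

lemma L1: "finite T \<Longrightarrow> (\<Sum>n\<in>T. w (Suc n)) \<le> WW w (card T)"
proof (induction "card T" arbitrary: T)
  case 0 then show ?case by (simp add: WW_def)
next
  case (Suc k)
  then have ne: "T \<noteq> {}" by auto
  define m where "m = Max T"
  have mT: "m \<in> T" using Suc ne m_def by simp
  have "T \<subseteq> {..m}" using Suc m_def by auto
  then have "card T \<le> Suc m" using card_mono[of "{..m}" T] by simp
  then have wm: "w (Suc m) \<le> w (card T)"
    using wanti[of "card T" "Suc m"] Suc by simp
  have IH: "(\<Sum>n\<in>T-{m}. w (Suc n)) \<le> WW w k"
  proof -
    have "k = card (T - {m})" using Suc mT by simp
    then show ?thesis using Suc(1)[of "T - {m}"] Suc(3) by simp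
  qed
  have "(\<Sum>n\<in>T. w (Suc n)) = (\<Sum>n\<in>T-{m}. w (Suc n)) + w (Suc m)"
    using Suc mT by (simp add: sum_diff1)
  also have "\<dots> \<le> WW w k + w (Suc k)" using IH wm Suc by simp
  also have "\<dots> = WW w (Suc k)" by (simp add: WW_def)
  also have "\<dots> = WW w (card T)" using Suc(2) by simp
  finally show ?case .
qed

lemma L2: "finite D \<Longrightarrow> (\<And>d. d \<in> D \<Longrightarrow> 1 \<le> \<kappa> d) \<Longrightarrow>
   (\<And>d. d \<in> D \<Longrightarrow> \<kappa> d \<le> card {e\<in>D. \<kappa> e < \<kappa> d} + 1) \<Longrightarrow>
   WW w (card D) \<le> (\<Sum>d\<in>D. w (\<kappa> d))"
proof (induction "card D" arbitrary: D)
  case 0 then show ?case by (simp add: WW_def)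
next
  case (Suc k)
  then have ne: "D \<noteq> {}" by auto
  have "Max (\<kappa> ` D) \<in> \<kappa> ` D" using Suc ne by (intro Max_in) auto
  then obtain d0 where d0D: "d0 \<in> D" and d0m: "\<kappa> d0 = Max (\<kappa> ` D)" by auto
  have d0: "d0 \<in> D" "\<And>e. e \<in> D \<Longrightarrow> \<kappa> e \<le> \<kappa> d0"
    using d0D d0m Suc by auto
  have sub: "{e\<in>D. \<kappa> e < \<kappa> d0} \<subseteq> D - {d0}" by auto
  have "card {e\<in>D. \<kappa> e < \<kappa> d0} \<le> k"
    using card_mono[OF _ sub] Suc d0 by simp
  then have "\<kappa> d0 \<le> Suc k" using Suc(5)[OF d0(1)] by simp
  then have wm: "w (Suc k) \<le> w (\<kappa> d0)" using wanti[of "\<kappa> d0" "Suc k"] Suc d0 by simp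
  have p1: "k = card (D - {d0})" using Suc d0 by simp
  have p2: "finite (D - {d0})" using Suc by simp
  have p3: "\<And>d. d \<in> D - {d0} \<Longrightarrow> 1 \<le> \<kappa> d" using Suc by simp
  have p4: "\<kappa> d \<le> card {e\<in>D - {d0}. \<kappa> e < \<kappa> d} + 1" if dd: "d \<in> D - {d0}" for d
  proof -
    have "{e\<in>D - {d0}. \<kappa> e < \<kappa> d} = {e\<in>D. \<kappa> e < \<kappa> d}"
      using d0 dd by fastforce
    then show ?thesis using Suc(5)[of d] dd by simp
  qed
  have IH: "WW w k \<le> (\<Sum>d\<in>D-{d0}. w (\<kappa> d))"
    using Suc(1)[of "D - {d0}"] p1 p2 p3 p4 by blast
  have "WW w (card D) = WW w (Suc k)" using Suc(2) by simp
  also have "\<dots> = WW w k + w (Suc k)" by (simp add: WW_def)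
  also have "\<dots> \<le> (\<Sum>d\<in>D-{d0}. w (\<kappa> d)) + w (\<kappa> d0)" using IH wm by simp
  also have "\<dots> = (\<Sum>d\<in>D. w (\<kappa> d))" using Suc d0 by (simp add: sum_diff1)
  finally show ?case .
qed

end

lemma ext_bij:
  fixes h :: "nat \<Rightarrow> nat"
  assumes "finite F" "inj_on h F"
  shows "\<exists>\<sigma>. bij \<sigma> \<and> (\<forall>i\<in>F. \<sigma> i = h i)"
proof -
  have i1: "infinite (UNIV - F)" using assms(1) by (simp add: Diff_infinite_finite)
  have i2: "infinite (UNIV - h ` F)" using assms(1) by (simp add: Diff_infinite_finite)
  have b1: "bij_betw (from_nat_into (UNIV - F)) UNIV (UNIV - F)"
    using i1 by (intro bij_betw_from_nat_into) auto
  have b2: "bij_betw (from_nat_into (UNIV - h ` F)) UNIV (UNIV - h ` F)"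
    using i2 by (intro bij_betw_from_nat_into) auto
  define k where "k = from_nat_into (UNIV - h ` F) \<circ> inv_into UNIV (from_nat_into (UNIV - F))"
  have bk: "bij_betw k (UNIV - F) (UNIV - h ` F)"
    unfolding k_def using bij_betw_trans[OF bij_betw_inv_into[OF b1] b2] .
  have bh: "bij_betw h F (h ` F)" using assms(2) by (simp add: bij_betw_imageI)
  have "bij_betw (\<lambda>x. if x \<in> F then h x else k x) (F \<union> (UNIV - F)) (h ` F \<union> (UNIV - h ` F))"
    by (rule bij_betw_disjoint_Un[OF bh bk]) auto
  then have "bij (\<lambda>x. if x \<in> F then h x else k x)" by (simp add: Un_Diff_cancel)
  then show ?thesis by (intro exI[of _ "\<lambda>x. if x \<in> F then h x else k x"]) auto
qed



definition nullf :: "('i \<Rightarrow> real) \<Rightarrow> bool" where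
  "nullf g \<longleftrightarrow> (\<forall>i. 0 \<le> g i) \<and> (\<forall>t>0. finite {i. t < g i})"

lemma decr_set_ne:
  assumes "nullf g"
  shows "{t. 0 \<le> t \<and> finite {i. t < g i} \<and> card {i. t < g i} \<le> n} \<noteq> {}"
proof -
  define s0 where "s0 = Max (insert 1 (g ` {i. 1 < g i}))"
  have fin: "finite {i. 1 < g i}" using assms unfolding nullf_def by auto
  have s1: "1 \<le> s0" unfolding s0_def using fin by simp
  have "{i. s0 < g i} = {}"
  proof (rule ccontr)
    assume "{i. s0 < g i} \<noteq> {}"
    then obtain i where i: "s0 < g i" by auto
    then have "1 < g i" using s1 by simp
    then have "g i \<le> s0" unfolding s0_def using fin by (intro Max_ge) auto
    then show False using i by simp
  qed
  then have "s0 \<in> {t. 0 \<le> t \<and> finite {i. t < g i} \<and> card {i. t < g i} \<le> n}"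
    using s1 by simp
  then show ?thesis by blast
qed

lemma decr_nonneg: "nullf g \<Longrightarrow> 0 \<le> decr_rearr g n"
  unfolding decr_rearr_def by (rule cInf_greatest[OF decr_set_ne]) auto

lemma decr_gt:
  fixes g :: "'i \<Rightarrow> real"
  assumes ng: "nullf g" and t: "t > 0"
  shows "t < decr_rearr g n \<longleftrightarrow> n < card {i. t < g i}"
proof
  let ?T = "{t. 0 \<le> t \<and> finite {i. t < g i} \<and> card {i. t < g i} \<le> n}"
  have fin: "finite {i. t < g i}" using ng t unfolding nullf_def by auto
  assume lt: "t < decr_rearr g n"
  have bdd: "bdd_below ?T" by (rule bdd_belowI[of _ 0]) auto
  show "n < card {i. t < g i}"
  proof (rule ccontr)
    assume "\<not> n < card {i. t < g i}"
    then have "t \<in> ?T" using fin t by simp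
    then have "Inf ?T \<le> t" by (rule cInf_lower[OF _ bdd])
    then show False using lt unfolding decr_rearr_def by simp
  qed
next
  let ?T = "{t. 0 \<le> t \<and> finite {i. t < g i} \<and> card {i. t < g i} \<le> n}"
  let ?S = "{i. t < g i}"
  have fin: "finite ?S" using ng t unfolding nullf_def by auto
  assume lt: "n < card ?S"
  then have ne: "?S \<noteq> {}" by (intro notI) simp
  define s1 where "s1 = Min (g ` ?S)"
  have "s1 \<in> g ` ?S" unfolding s1_def using fin ne by (intro Min_in) auto
  then have ts1: "t < s1" by auto
  have s1le: "\<And>i. i \<in> ?S \<Longrightarrow> s1 \<le> g i" unfolding s1_def using fin by (intro Min_le) auto
  have "s1 \<le> Inf ?T"
  proof (rule cInf_greatest[OF decr_set_ne[OF ng]])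
    fix s assume sT: "s \<in> ?T"
    show "s1 \<le> s"
    proof (rule ccontr)
      assume "\<not> s1 \<le> s"
      then have "?S \<subseteq> {i. s < g i}" using s1le by force
      then have "card ?S \<le> card {i. s < g i}" using sT by (intro card_mono) auto
      then show False using sT lt by simp
    qed
  qed
  then show "t < decr_rearr g n" using ts1 unfolding decr_rearr_def by simp
qed

lemma decr_level: "nullf g \<Longrightarrow> t > 0 \<Longrightarrow> {n. t < decr_rearr g n} = {..< card {i. t < g i}}"
  using decr_gt by auto

lemma decr_nullf: "nullf g \<Longrightarrow> nullf (decr_rearr g)"
  unfolding nullf_def[of "decr_rearr g"] using decr_nonneg decr_level[of g] by auto

lemma decr_card: "nullf g \<Longrightarrow> t > 0 \<Longrightarrow> card {n. t < decr_rearr g n} = card {i. t < g i}"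
  by (simp add: decr_level)

lemma decr_mono:
  fixes g :: "'i \<Rightarrow> real" and g' :: "'j \<Rightarrow> real"
  assumes "nullf g" "nullf g'" "\<And>s. s > 0 \<Longrightarrow> card {i. s < g i} \<le> card {j. s < g' j}"
  shows "decr_rearr g n \<le> decr_rearr g' n"
proof (rule ccontr)
  assume "\<not> ?thesis"
  then have lt: "decr_rearr g' n < decr_rearr g n" by simp
  define s where "s = (decr_rearr g' n + decr_rearr g n) / 2"
  have s0: "s > 0" using lt decr_nonneg[OF assms(2), of n] unfolding s_def by simp
  have "s < decr_rearr g n" using lt unfolding s_def by simp
  then have "n < card {i. s < g i}" using decr_gt[OF assms(1) s0] by simp
  then have "n < card {j. s < g' j}" using assms(3)[OF s0] by simp
  then have "s < decr_rearr g' n" using decr_gt[OF assms(2) s0] by simp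
  then show False using lt unfolding s_def by simp
qed



definition Lam :: "(nat \<Rightarrow> real) \<Rightarrow> ('i \<Rightarrow> real) \<Rightarrow> ennreal" where
  "Lam w g = (\<integral>\<^sup>+t. indicator {0<..} t * ennreal (WW w (card {i. t < g i})) \<partial>lborel)"

lemma ennreal_mult_Ioo:
  fixes c y :: real assumes "0 \<le> c"
  shows "ennreal (c * y) = ennreal c * emeasure lborel {0<..<y}"
proof (cases "0 \<le> y")
  case True
  then show ?thesis using assms by (simp add: emeasure_lborel_Ioo ennreal_mult)
next
  case False
  then have "c * y \<le> 0" using assms by (simp add: mult_nonneg_nonpos)
  then show ?thesis using False by (simp add: ennreal_neg)
qed

lemma layer:
  fixes c y :: "nat \<Rightarrow> real"
  assumes "\<And>n. 0 \<le> c n"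
  shows "(\<Sum>n. ennreal (c n * y n)) = (\<integral>\<^sup>+t. (\<Sum>n. ennreal (c n) * indicator {0<..<y n} t) \<partial>lborel)"
proof -
  have "(\<integral>\<^sup>+t. (\<Sum>n. ennreal (c n) * indicator {0<..<y n} t) \<partial>lborel)
      = (\<Sum>n. \<integral>\<^sup>+t. ennreal (c n) * indicator {0<..<y n} t \<partial>lborel)"
    by (rule nn_integral_suminf) measurable
  also have "\<dots> = (\<Sum>n. ennreal (c n * y n))"
    using assms by (simp add: nn_integral_cmult_indicator ennreal_mult_Ioo)
  finally show ?thesis by simp
qed

lemma layer2:
  fixes c d y z :: "nat \<Rightarrow> real"
  assumes "\<And>n. 0 \<le> c n" "\<And>n. 0 \<le> d n"
  shows "(\<Sum>i. \<Sum>j. ennreal (c i * d j * (y i * z j)))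
       = (\<integral>\<^sup>+t. (\<Sum>i. \<Sum>j. ennreal (c i * d j) * indicator {0<..<y i * z j} t) \<partial>lborel)"
proof -
  have "(\<Sum>i. \<Sum>j. ennreal (c i * d j * (y i * z j)))
      = (\<Sum>i. \<integral>\<^sup>+t. (\<Sum>j. ennreal (c i * d j) * indicator {0<..<y i * z j} t) \<partial>lborel)"
    using assms by (subst layer) (auto intro: mult_nonneg_nonneg)
  also have "\<dots> = (\<integral>\<^sup>+t. (\<Sum>i. \<Sum>j. ennreal (c i * d j) * indicator {0<..<y i * z j} t) \<partial>lborel)"
    by (rule nn_integral_suminf[symmetric]) measurable
  finally show ?thesis .
qed

lemma sum_ind_fin:
  fixes c y :: "nat \<Rightarrow> real"
  assumes "finite {n. t < y n}" "t > 0" "\<And>n. 0 \<le> c n"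
  shows "(\<Sum>n. ennreal (c n) * indicator {0<..<y n} t) = ennreal (\<Sum>n\<in>{n. t < y n}. c n)"
proof -
  have "(\<Sum>n. ennreal (c n) * indicator {0<..<y n} t) = (\<Sum>n\<in>{n. t < y n}. ennreal (c n) * indicator {0<..<y n} t)"
    by (rule suminf_finite[OF assms(1)]) (simp add: indicator_def)
  also have "\<dots> = (\<Sum>n\<in>{n. t < y n}. ennreal (c n))"
    using assms(2) by (intro sum.cong) (auto simp: indicator_def)
  also have "\<dots> = ennreal (\<Sum>n\<in>{n. t < y n}. c n)"
    using assms(3) by (rule sum_ennreal)
  finally show ?thesis .
qed

lemma ind_nonpos: "(t::real) \<le> 0 \<Longrightarrow> indicator {0<..<y} t = (0::ennreal)"
  by (simp add: indicator_def)

context wseq begin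

lemma wnn: "0 \<le> w (Suc n)" using wpos[of "Suc n"] by simp

lemma P2:
  fixes g :: "nat \<Rightarrow> real"
  assumes ng: "nullf g" and bp: "bij \<pi>"
  shows "(\<Sum>n. ennreal (w (Suc n) * g (\<pi> n))) \<le> Lam w g"
proof -
  have "(\<Sum>n. ennreal (w (Suc n) * g (\<pi> n)))
      = (\<integral>\<^sup>+t. (\<Sum>n. ennreal (w (Suc n)) * indicator {0<..<g (\<pi> n)} t) \<partial>lborel)"
    by (rule layer) (rule wnn)
  also have "\<dots> \<le> Lam w g" unfolding Lam_def
  proof (rule nn_integral_mono)
    fix t :: real
    show "(\<Sum>n. ennreal (w (Suc n)) * indicator {0<..<g (\<pi> n)} t)
        \<le> indicator {0<..} t * ennreal (WW w (card {i. t < g i}))"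
    proof (cases "t > 0")
      case False
      then show ?thesis by (simp add: ind_nonpos)
    next
      case True
      have inj: "inj \<pi>" using bp by (simp add: bij_is_inj)
      have eq: "{n. t < g (\<pi> n)} = \<pi> -` {i. t < g i}" by auto
      have fS: "finite {i. t < g i}" using ng True unfolding nullf_def by auto
      have fin: "finite {n. t < g (\<pi> n)}" by (subst eq) (rule finite_vimageI[OF fS inj])
      have cd: "card {n. t < g (\<pi> n)} = card {i. t < g i}" unfolding eq
        using inj bp by (intro card_vimage_inj) (auto simp: bij_def)
      have "(\<Sum>n. ennreal (w (Suc n)) * indicator {0<..<g (\<pi> n)} t) = ennreal (\<Sum>n\<in>{n. t < g (\<pi> n)}. w (Suc n))"
        by (rule sum_ind_fin[OF fin True]) (rule wnn)
      also have "\<dots> \<le> ennreal (WW w (card {i. t < g i}))"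
        using L1[OF fin] cd by (intro ennreal_leI) simp
      finally show ?thesis using True by simp
    qed
  qed
  finally show ?thesis .
qed

end

definition rk :: "(nat \<Rightarrow> real) \<Rightarrow> nat \<Rightarrow> nat" where
  "rk g i = card {k. g i < g k} + card {k. k < i \<and> g k = g i}"

definition Aset :: "(nat \<Rightarrow> real) \<Rightarrow> nat \<Rightarrow> nat set" where
  "Aset g i = {k. g i < g k} \<union> {k. k < i \<and> g k = g i}"

lemma Aset_fin: "nullf g \<Longrightarrow> 0 < g i \<Longrightarrow> finite (Aset g i)"
  unfolding Aset_def nullf_def by auto

lemma rk_card: "nullf g \<Longrightarrow> 0 < g i \<Longrightarrow> card (Aset g i) = rk g i"
  unfolding Aset_def rk_def nullf_def by (subst card_Un_disjoint) auto

lemma Aset_ge: "k \<in> Aset g i \<Longrightarrow> g i \<le> g k"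
  unfolding Aset_def by auto

lemma rk_less:
  assumes ng: "nullf g" and gi: "0 < g i" and k: "k \<in> Aset g i"
  shows "rk g k < rk g i"
proof -
  have gk: "0 < g k" using Aset_ge[OF k] gi by simp
  have "Aset g k \<subset> Aset g i"
  proof
    show "Aset g k \<subseteq> Aset g i" using k unfolding Aset_def by auto
    show "Aset g k \<noteq> Aset g i" using k unfolding Aset_def by auto
  qed
  then have "card (Aset g k) < card (Aset g i)" using Aset_fin[OF ng gi] by (rule psubset_card_mono[rotated])
  then show ?thesis using rk_card[OF ng gi] rk_card[OF ng gk] by simp
qed

lemma rk_inj: assumes ng: "nullf g" shows "inj_on (rk g) {i. 0 < g i}"
proof (rule inj_onI)
  fix i k assume i: "i \<in> {i. 0 < g i}" and k: "k \<in> {i. 0 < g i}" and eq: "rk g i = rk g k"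
  show "i = k"
  proof (rule ccontr)
    assume ne: "i \<noteq> k"
    have "k \<in> Aset g i \<or> i \<in> Aset g k" using ne unfolding Aset_def by (cases "g i = g k") auto
    then show False using rk_less[OF ng, of i k] rk_less[OF ng, of k i] i k eq by auto
  qed
qed

context wseq begin

lemma P3a:
  fixes g :: "nat \<Rightarrow> real"
  assumes ng: "nullf g"
  shows "Lam w g \<le> (\<Sum>i. ennreal (w (Suc (rk g i)) * g i))"
proof -
  have "(\<Sum>i. ennreal (w (Suc (rk g i)) * g i))
      = (\<integral>\<^sup>+t. (\<Sum>i. ennreal (w (Suc (rk g i))) * indicator {0<..<g i} t) \<partial>lborel)"
    by (rule layer) (rule wnn)
  moreover have "Lam w g \<le> \<dots>" unfolding Lam_def
  proof (rule nn_integral_mono)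
    fix t :: real
    show "indicator {0<..} t * ennreal (WW w (card {i. t < g i}))
        \<le> (\<Sum>i. ennreal (w (Suc (rk g i))) * indicator {0<..<g i} t)"
    proof (cases "t > 0")
      case False
      then show ?thesis by simp
    next
      case True
      let ?S = "{i. t < g i}"
      have fS: "finite ?S" using ng True unfolding nullf_def by auto
      have "WW w (card ?S) \<le> (\<Sum>i\<in>?S. w (Suc (rk g i)))"
      proof (rule L2[OF fS])
        fix d assume d: "d \<in> ?S"
        then have gd: "0 < g d" using True by simp
        have "Aset g d \<subseteq> {e\<in>?S. rk g e < rk g d}"
          using d rk_less[OF ng gd] Aset_ge[of _ g d] by fastforce
        then have "card (Aset g d) \<le> card {e\<in>?S. rk g e < rk g d}"
          by (rule card_mono[rotated]) (use fS in simp)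
        then show "Suc (rk g d) \<le> card {e\<in>?S. Suc (rk g e) < Suc (rk g d)} + 1"
          using rk_card[OF ng gd] by simp
      qed simp
      then have "ennreal (WW w (card ?S)) \<le> (\<Sum>i. ennreal (w (Suc (rk g i))) * indicator {0<..<g i} t)"
        using sum_ind_fin[OF fS True, of "\<lambda>i. w (Suc (rk g i))"] wnn by (simp add: ennreal_leI)
      then show ?thesis using True by simp
    qed
  qed
  ultimately show ?thesis by simp
qed

lemma P3b:
  fixes g :: "nat \<Rightarrow> real"
  assumes ng: "nullf g"
  shows "(\<Sum>i. ennreal (w (Suc (rk g i)) * g i))
      \<le> (SUP \<pi>\<in>{\<pi>::nat\<Rightarrow>nat. bij \<pi>}. \<Sum>n. ennreal (w (Suc n) * g (\<pi> n)))"
proof -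
  have main: "(\<Sum>i<N. ennreal (w (Suc (rk g i)) * g i))
      \<le> (SUP \<pi>\<in>{\<pi>::nat\<Rightarrow>nat. bij \<pi>}. \<Sum>n. ennreal (w (Suc n) * g (\<pi> n)))" for N
  proof -
  define F where "F = {i. i < N \<and> 0 < g i}"
  have fF: "finite F" unfolding F_def by simp
  have injF: "inj_on (rk g) F" using rk_inj[OF ng] unfolding F_def by (rule inj_on_subset) auto
  obtain \<sigma> where \<sigma>: "bij \<sigma>" "\<And>i. i \<in> F \<Longrightarrow> \<sigma> i = rk g i"
    using ext_bij[OF fF injF] by auto
  define \<pi> where "\<pi> = inv \<sigma>"
  have bp: "bij \<pi>" unfolding \<pi>_def using \<sigma>(1) by (rule bij_imp_bij_inv)
  have pr: "\<pi> (rk g i) = i" if "i \<in> F" for i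
    unfolding \<pi>_def using \<sigma> that by (metis bij_is_inj inv_f_f)
  have g0: "\<And>i. 0 \<le> g i" using ng unfolding nullf_def by auto
  have "(\<Sum>i<N. ennreal (w (Suc (rk g i)) * g i)) = (\<Sum>i\<in>F. ennreal (w (Suc (rk g i)) * g i))"
  proof (rule sum.mono_neutral_right)
    show "\<forall>i\<in>{..<N} - F. ennreal (w (Suc (rk g i)) * g i) = 0"
    proof
      fix i assume "i \<in> {..<N} - F"
      then have "g i = 0" using g0[of i] unfolding F_def by force
      then show "ennreal (w (Suc (rk g i)) * g i) = 0" by simp
    qed
  qed (auto simp: F_def)
  also have "\<dots> = (\<Sum>i\<in>F. ennreal (w (Suc (rk g i)) * g (\<pi> (rk g i))))"
    using pr by simp
  also have "\<dots> = (\<Sum>n\<in>rk g ` F. ennreal (w (Suc n) * g (\<pi> n)))"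
    using injF by (simp add: sum.reindex)
  also have "\<dots> \<le> (\<Sum>n. ennreal (w (Suc n) * g (\<pi> n)))"
    by (rule sum_le_suminf) (auto simp: fF)
  also have "\<dots> \<le> (SUP \<pi>\<in>{\<pi>::nat\<Rightarrow>nat. bij \<pi>}. \<Sum>n. ennreal (w (Suc n) * g (\<pi> n)))"
    using bp by (intro SUP_upper) simp
  finally show ?thesis .
  qed
  show ?thesis
    unfolding suminf_eq_SUP[of "\<lambda>i. ennreal (w (Suc (rk g i)) * g i)"]
    by (rule SUP_least) (rule main)
qed

end


lemma null_fin: "\<alpha> \<longlonglongrightarrow> 0 \<Longrightarrow> s > 0 \<Longrightarrow> finite {i. s < norm (\<alpha> i :: complex)}"
proof -
  assume a: "\<alpha> \<longlonglongrightarrow> 0" and s: "s > 0"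
  then obtain no where "\<forall>n\<ge>no. norm (\<alpha> n - 0) < s" unfolding LIMSEQ_iff by blast
  then have "{i. s < norm (\<alpha> i)} \<subseteq> {..<no}" by (auto simp: not_le[symmetric])
  then show ?thesis by (rule finite_subset) simp
qed

lemma powr_level:
  fixes t x p :: real assumes "t > 0" "p > 0" "x \<ge> 0"
  shows "t < x powr p \<longleftrightarrow> t powr (1/p) < x"
proof
  assume "t < x powr p"
  then have "t powr (1/p) < (x powr p) powr (1/p)" using assms by (intro powr_less_mono2) auto
  then show "t powr (1/p) < x" using assms by (simp add: powr_powr)
next
  assume "t powr (1/p) < x"
  then have "(t powr (1/p)) powr p < x powr p" using assms by (intro powr_less_mono2) auto
  then show "t < x powr p" using assms by (simp add: powr_powr)
qed

lemma level_pow: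
  assumes "t > 0" "p > 0"
  shows "{i. t < norm (\<alpha> i :: complex) powr p} = {i. t powr (1/p) < norm (\<alpha> i)}"
  using powr_level[OF assms] by auto

lemma nullf_norm: "\<alpha> \<longlonglongrightarrow> 0 \<Longrightarrow> nullf (\<lambda>i. norm (\<alpha> i :: complex))"
  unfolding nullf_def using null_fin by auto

lemma nullf_pow: assumes a: "\<alpha> \<longlonglongrightarrow> 0" and p: "p > 0" shows "nullf (\<lambda>i. norm (\<alpha> i :: complex) powr p)"
  unfolding nullf_def
proof (intro conjI allI impI)
  fix t :: real assume t: "t > 0"
  have "t powr (1/p) > 0" using t by simp
  then show "finite {i. t < norm (\<alpha> i) powr p}" unfolding level_pow[OF t p] by (rule null_fin[OF a])
qed simp

context wseq begin

lemma pow_le_Lam: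
  assumes "nullf (\<lambda>i. norm (\<alpha> i) powr p)"
  shows "lorentz_pow w p \<alpha> \<le> Lam w (\<lambda>i. norm (\<alpha> i) powr p)"
  unfolding lorentz_pow_def
  using P2[OF assms] by (intro SUP_least) simp

lemma Lam_le_pow:
  assumes "nullf (\<lambda>i. norm (\<alpha> i) powr p)"
  shows "Lam w (\<lambda>i. norm (\<alpha> i) powr p) \<le> lorentz_pow w p \<alpha>"
  unfolding lorentz_pow_def
  using order_trans[OF P3a[OF assms] P3b[OF assms]] by simp

lemma rksum_le_pow:
  assumes "nullf (\<lambda>i. norm (\<alpha> i) powr p)"
  shows "(\<Sum>i. ennreal (w (Suc (rk (\<lambda>i. norm (\<alpha> i) powr p) i)) * norm (\<alpha> i) powr p)) \<le> lorentz_pow w p \<alpha>"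
  unfolding lorentz_pow_def
  using P3b[OF assms] by simp

lemma Lam_mono:
  assumes "\<And>t. t > 0 \<Longrightarrow> card {i. t < g i} \<le> card {j. t < g' j}"
  shows "Lam w g \<le> Lam w g'"
  unfolding Lam_def
proof (rule nn_integral_mono)
  fix t :: real
  show "indicator {0<..} t * ennreal (WW w (card {i. t < g i})) \<le> indicator {0<..} t * ennreal (WW w (card {i. t < g' i}))"
    using assms[of t] WW_mono by (cases "t > 0") (auto intro: ennreal_leI)
qed

lemma P1:
  assumes ns: "\<not> summable (\<lambda>n. w (Suc n))" and p: "p > 0"
    and L: "\<alpha> \<in> lorentz_space w p"
  shows "\<alpha> \<longlonglongrightarrow> 0"
proof (rule ccontr)
  assume "\<not> \<alpha> \<longlonglongrightarrow> 0"
  then obtain \<epsilon> where e: "\<epsilon> > 0" and ee: "\<And>N. \<exists>n\<ge>N. \<epsilon> \<le> norm (\<alpha> n)"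
    unfolding LIMSEQ_iff by (auto simp: not_less)
  define E where "E = {n. \<epsilon> \<le> norm (\<alpha> n)}"
  have infE: "infinite E" unfolding E_def infinite_nat_iff_unbounded_le using ee by auto
  have low: "ennreal (\<epsilon> powr p * WW w N) \<le> lorentz_pow w p \<alpha>" for N
  proof -
    obtain B where B: "finite B" "card B = N" "B \<subseteq> E" using infinite_arbitrarily_large[OF infE] by blast
    obtain h where h: "bij_betw h B {0..<card B}" using ex_bij_betw_finite_nat[OF B(1)] by blast
    obtain \<sigma> where \<sigma>: "bij \<sigma>" "\<And>i. i \<in> B \<Longrightarrow> \<sigma> i = h i"
      using ext_bij[OF B(1) bij_betw_imp_inj_on[OF h]] by blast
    define \<pi> where "\<pi> = inv \<sigma>"
    have bp: "bij \<pi>" unfolding \<pi>_def using \<sigma>(1) by (rule bij_imp_bij_inv)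
    have inB: "\<pi> n \<in> B" if "n < N" for n
    proof -
      have "n \<in> h ` B" using h that B(2) by (auto simp: bij_betw_def)
      then obtain b where b: "b \<in> B" "n = h b" by auto
      then have "\<pi> n = b" unfolding \<pi>_def using \<sigma> by (metis bij_is_inj inv_f_f)
      then show ?thesis using b by simp
    qed
    have "ennreal (\<epsilon> powr p * WW w N) = (\<Sum>n<N. ennreal (w (Suc n) * \<epsilon> powr p))"
      unfolding WW_def by (simp add: sum_distrib_left mult.commute sum_ennreal wnn)
    also have "\<dots> \<le> (\<Sum>n<N. ennreal (w (Suc n) * norm (\<alpha> (\<pi> n)) powr p))"
    proof (rule sum_mono)
      fix n assume "n \<in> {..<N}"
      then have "\<epsilon> \<le> norm (\<alpha> (\<pi> n))" using inB B(3) unfolding E_def by auto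
      then have "\<epsilon> powr p \<le> norm (\<alpha> (\<pi> n)) powr p" using e p by (intro powr_mono2) auto
      then show "ennreal (w (Suc n) * \<epsilon> powr p) \<le> ennreal (w (Suc n) * norm (\<alpha> (\<pi> n)) powr p)"
        using wnn by (intro ennreal_leI mult_left_mono) auto
    qed
    also have "\<dots> \<le> (\<Sum>n. ennreal (w (Suc n) * norm (\<alpha> (\<pi> n)) powr p))"
      by (rule sum_le_suminf) auto
    also have "\<dots> \<le> lorentz_pow w p \<alpha>"
      unfolding lorentz_pow_def using bp by (intro SUP_upper) simp
    finally show ?thesis .
  qed
  have "lorentz_pow w p \<alpha> < \<infinity>" using L unfolding lorentz_space_def by simp
  then obtain R where R: "lorentz_pow w p \<alpha> = ennreal R" "0 \<le> R"
    by (cases "lorentz_pow w p \<alpha>") auto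
  have ep: "\<epsilon> powr p > 0" using e by simp
  have "summable (\<lambda>n. w (Suc n))"
  proof (rule summableI_nonneg_bounded)
    show "0 \<le> w (Suc n)" for n by (rule wnn)
    fix N
    have "\<epsilon> powr p * WW w N \<le> R" using low[of N] R by (simp add: ennreal_le_iff)
    then have "WW w N \<le> R / \<epsilon> powr p" using ep by (simp add: field_simps)
    then show "sum (\<lambda>n. w (Suc n)) {..<N} \<le> R / \<epsilon> powr p" unfolding WW_def .
  qed
  then show False using ns by simp
qed

lemma solid:
  assumes ns: "\<not> summable (\<lambda>n. w (Suc n))" and p: "p > 0"
    and L: "\<alpha> \<in> lorentz_space w p" and b: "\<beta> \<longlonglongrightarrow> 0"
    and st: "\<And>n. star \<beta> n \<le> star \<alpha> n"
  shows "\<beta> \<in> lorentz_space w p"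
proof -
  have a: "\<alpha> \<longlonglongrightarrow> 0" by (rule P1[OF ns p L])
  have "lorentz_pow w p \<beta> \<le> Lam w (\<lambda>i. norm (\<beta> i) powr p)"
    by (rule pow_le_Lam[OF nullf_pow[OF b p]])
  also have "\<dots> \<le> Lam w (\<lambda>i. norm (\<alpha> i) powr p)"
  proof (rule Lam_mono)
    fix t :: real assume t: "t > 0"
    define s where "s = t powr (1/p)"
    have s: "s > 0" unfolding s_def using t by simp
    have "card {i. s < norm (\<beta> i)} = card {n. s < star \<beta> n}"
      unfolding star_def using decr_card[OF nullf_norm[OF b] s] by simp
    also have "\<dots> \<le> card {n. s < star \<alpha> n}"
    proof (rule card_mono)
      show "finite {n. s < star \<alpha> n}" unfolding star_def using decr_level[OF nullf_norm[OF a] s] by simp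
      show "{n. s < star \<beta> n} \<subseteq> {n. s < star \<alpha> n}" using st by (auto intro: less_le_trans)
    qed
    also have "\<dots> = card {i. s < norm (\<alpha> i)}"
      unfolding star_def using decr_card[OF nullf_norm[OF a] s] by simp
    finally show "card {i. t < norm (\<beta> i) powr p} \<le> card {i. t < norm (\<alpha> i) powr p}"
      using level_pow[OF t p, of \<beta>] level_pow[OF t p, of \<alpha>] unfolding s_def by simp
  qed
  also have "\<dots> \<le> lorentz_pow w p \<alpha>" by (rule Lam_le_pow[OF nullf_pow[OF a p]])
  finally have "lorentz_pow w p \<beta> \<le> lorentz_pow w p \<alpha>" .
  then show ?thesis using L unfolding lorentz_space_def by (auto intro: le_less_trans)
qed

lemma add_closed:
  assumes p: "p > 0" and A: "\<alpha> \<in> lorentz_space w p" and B: "\<beta> \<in> lorentz_space w p"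
  shows "(\<lambda>n. \<alpha> n + \<beta> n) \<in> lorentz_space w p"
proof -
  have pt: "norm (x + y) powr p \<le> 2 powr p * (norm x powr p) + 2 powr p * (norm y powr p)" for x y :: complex
  proof -
    have "norm (x + y) \<le> 2 * max (norm x) (norm y)" using norm_triangle_ineq[of x y] by linarith
    then have "norm (x + y) powr p \<le> (2 * max (norm x) (norm y)) powr p"
      using p by (intro powr_mono2) auto
    also have "\<dots> = 2 powr p * max (norm x) (norm y) powr p" by (simp add: powr_mult)
    also have "\<dots> \<le> 2 powr p * (norm x powr p) + 2 powr p * (norm y powr p)"
      by (cases "norm x \<le> norm y") (auto simp: max_def)
    finally show ?thesis .
  qed
  have "lorentz_pow w p (\<lambda>n. \<alpha> n + \<beta> n) \<le> ennreal (2 powr p) * lorentz_pow w p \<alpha> + ennreal (2 powr p) * lorentz_pow w p \<beta>"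
    unfolding lorentz_pow_def[of w p "\<lambda>n. \<alpha> n + \<beta> n"]
  proof (rule SUP_least)
    fix \<pi> :: "nat \<Rightarrow> nat" assume bp: "\<pi> \<in> {\<pi>. bij \<pi>}"
    have "(\<Sum>n. ennreal (w (Suc n) * norm (\<alpha> (\<pi> n) + \<beta> (\<pi> n)) powr p))
       \<le> (\<Sum>n. ennreal (2 powr p) * ennreal (w (Suc n) * norm (\<alpha> (\<pi> n)) powr p)
              + ennreal (2 powr p) * ennreal (w (Suc n) * norm (\<beta> (\<pi> n)) powr p))"
    proof (rule suminf_le)
      fix n
      let ?A = "w (Suc n) * norm (\<alpha> (\<pi> n)) powr p" and ?B = "w (Suc n) * norm (\<beta> (\<pi> n)) powr p"
      have A0: "0 \<le> ?A" and B0: "0 \<le> ?B" using wnn[of n] by auto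
      have "w (Suc n) * norm (\<alpha> (\<pi> n) + \<beta> (\<pi> n)) powr p
          \<le> w (Suc n) * (2 powr p * (norm (\<alpha> (\<pi> n)) powr p) + 2 powr p * (norm (\<beta> (\<pi> n)) powr p))"
        using pt wnn by (intro mult_left_mono) auto
      also have "\<dots> = 2 powr p * ?A + 2 powr p * ?B"
        by (simp add: algebra_simps)
      finally have r: "w (Suc n) * norm (\<alpha> (\<pi> n) + \<beta> (\<pi> n)) powr p \<le> 2 powr p * ?A + 2 powr p * ?B" .
      have e1: "ennreal (2 powr p) * ennreal ?A = ennreal (2 powr p * ?A)" using A0 by (simp add: ennreal_mult)
      have e2: "ennreal (2 powr p) * ennreal ?B = ennreal (2 powr p * ?B)" using B0 by (simp add: ennreal_mult)
      have e3: "ennreal (2 powr p * ?A) + ennreal (2 powr p * ?B) = ennreal (2 powr p * ?A + 2 powr p * ?B)"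
        using A0 B0 by (intro ennreal_plus[symmetric]) auto
      show "ennreal (w (Suc n) * norm (\<alpha> (\<pi> n) + \<beta> (\<pi> n)) powr p)
          \<le> ennreal (2 powr p) * ennreal ?A + ennreal (2 powr p) * ennreal ?B"
        unfolding e1 e2 e3 using r by (rule ennreal_leI)
    qed auto
    also have "\<dots> = ennreal (2 powr p) * (\<Sum>n. ennreal (w (Suc n) * norm (\<alpha> (\<pi> n)) powr p))
              + ennreal (2 powr p) * (\<Sum>n. ennreal (w (Suc n) * norm (\<beta> (\<pi> n)) powr p))"
      by (simp add: suminf_add[symmetric] ennreal_suminf_cmult)
    also have "\<dots> \<le> ennreal (2 powr p) * lorentz_pow w p \<alpha> + ennreal (2 powr p) * lorentz_pow w p \<beta>"
      unfolding lorentz_pow_def using bp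
      by (intro add_mono mult_left_mono SUP_upper) auto
    finally show "(\<Sum>n. ennreal (w (Suc n) * norm (\<alpha> (\<pi> n) + \<beta> (\<pi> n)) powr p)) \<le> \<dots>" .
  qed
  also have "\<dots> < \<infinity>" using A B unfolding lorentz_space_def
    by (simp add: ennreal_add_less_top ennreal_mult_less_top)
  finally show ?thesis unfolding lorentz_space_def by simp
qed

lemma smul_closed:
  assumes p: "p > 0" and A: "\<alpha> \<in> lorentz_space w p"
  shows "(\<lambda>n. c * \<alpha> n) \<in> lorentz_space w p"
proof -
  have "lorentz_pow w p (\<lambda>n. c * \<alpha> n) \<le> ennreal (norm c powr p) * lorentz_pow w p \<alpha>"
    unfolding lorentz_pow_def[of w p "\<lambda>n. c * \<alpha> n"]
  proof (rule SUP_least)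
    fix \<pi> :: "nat \<Rightarrow> nat" assume bp: "\<pi> \<in> {\<pi>. bij \<pi>}"
    have "(\<Sum>n. ennreal (w (Suc n) * norm (c * \<alpha> (\<pi> n)) powr p))
        = (\<Sum>n. ennreal (norm c powr p) * ennreal (w (Suc n) * norm (\<alpha> (\<pi> n)) powr p))"
    proof (rule suminf_cong)
      fix n
      have "w (Suc n) * norm (c * \<alpha> (\<pi> n)) powr p = norm c powr p * (w (Suc n) * norm (\<alpha> (\<pi> n)) powr p)"
        by (simp add: norm_mult powr_mult)
      then show "ennreal (w (Suc n) * norm (c * \<alpha> (\<pi> n)) powr p) = ennreal (norm c powr p) * ennreal (w (Suc n) * norm (\<alpha> (\<pi> n)) powr p)"
        unfolding \<open>w (Suc n) * norm (c * \<alpha> (\<pi> n)) powr p = _\<close>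
        using wnn[of n] by (intro ennreal_mult) auto
    qed
    also have "\<dots> = ennreal (norm c powr p) * (\<Sum>n. ennreal (w (Suc n) * norm (\<alpha> (\<pi> n)) powr p))"
      by (simp add: ennreal_suminf_cmult)
    also have "\<dots> \<le> ennreal (norm c powr p) * lorentz_pow w p \<alpha>"
      unfolding lorentz_pow_def using bp by (intro mult_left_mono SUP_upper) auto
    finally show "(\<Sum>n. ennreal (w (Suc n) * norm (c * \<alpha> (\<pi> n)) powr p)) \<le> \<dots>" .
  qed
  also have "\<dots> < \<infinity>" using A unfolding lorentz_space_def
    by (simp add: ennreal_mult_less_top)
  finally show ?thesis unfolding lorentz_space_def by simp
qed

lemma zero_in: "(\<lambda>n. 0) \<in> lorentz_space w p"
proof -
  have "lorentz_pow w p (\<lambda>n. 0) \<le> 0" unfolding lorentz_pow_def by (rule SUP_least) simp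
  then show ?thesis unfolding lorentz_space_def by simp
qed

end


definition xprod :: "(nat \<Rightarrow> complex) \<Rightarrow> (nat \<Rightarrow> complex) \<Rightarrow> nat \<times> nat \<Rightarrow> real" where
  "xprod \<alpha> \<beta> = (\<lambda>(i, j). norm (\<alpha> i) * norm (\<beta> j))"

lemma null_bound: "\<alpha> \<longlonglongrightarrow> 0 \<Longrightarrow> \<exists>M>0. \<forall>i. norm (\<alpha> i :: complex) \<le> M"
  using convergent_imp_Bseq[OF convergentI] by (metis BseqE)

lemma nullf_xprod:
  assumes a: "\<alpha> \<longlonglongrightarrow> 0" and b: "\<beta> \<longlonglongrightarrow> 0"
  shows "nullf (xprod \<alpha> \<beta>)"
  unfolding nullf_def
proof (intro conjI allI impI)
  show "0 \<le> xprod \<alpha> \<beta> d" for d unfolding xprod_def by (auto split: prod.splits)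
  fix t :: real assume t: "t > 0"
  obtain Ma where Ma: "Ma > 0" "\<And>i. norm (\<alpha> i) \<le> Ma" using null_bound[OF a] by blast
  obtain Mb where Mb: "Mb > 0" "\<And>i. norm (\<beta> i) \<le> Mb" using null_bound[OF b] by blast
  have "{d. t < xprod \<alpha> \<beta> d} \<subseteq> {i. t / Mb < norm (\<alpha> i)} \<times> {j. t / Ma < norm (\<beta> j)}"
  proof (clarsimp simp: xprod_def)
    fix i j assume lt: "t < norm (\<alpha> i) * norm (\<beta> j)"
    have "norm (\<alpha> i) * norm (\<beta> j) \<le> norm (\<alpha> i) * Mb" using Mb by (intro mult_left_mono) auto
    then have "t < norm (\<alpha> i) * Mb" using lt by simp
    then have 1: "t / Mb < norm (\<alpha> i)" using Mb by (simp add: field_simps)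
    have "norm (\<alpha> i) * norm (\<beta> j) \<le> Ma * norm (\<beta> j)" using Ma by (intro mult_right_mono) auto
    then have "t < Ma * norm (\<beta> j)" using lt by simp
    then have 2: "t / Ma < norm (\<beta> j)" using Ma by (simp add: field_simps)
    show "t / Mb < norm (\<alpha> i) \<and> t / Ma < norm (\<beta> j)" using 1 2 by simp
  qed
  moreover have "finite ({i. t / Mb < norm (\<alpha> i)} \<times> {j. t / Ma < norm (\<beta> j)})"
    using t Ma Mb by (intro finite_cartesian_product null_fin[OF a] null_fin[OF b]) auto
  ultimately show "finite {d. t < xprod \<alpha> \<beta> d}" by (rule finite_subset)
qed

lemma tensor_norm: "nullf (xprod \<alpha> \<beta>) \<Longrightarrow> (\<lambda>n. norm (tensor \<alpha> \<beta> n)) = decr_rearr (xprod \<alpha> \<beta>)"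
  unfolding tensor_def xprod_def using decr_nonneg by fastforce

lemma xprod_level:
  assumes t: "t > 0" and p: "p > 0"
  shows "{d. t powr (1/p) < xprod \<alpha> \<beta> d}
       = {(i, j). t < norm (\<alpha> i) powr p * norm (\<beta> j) powr p}"
  using powr_level[OF t p] unfolding xprod_def by (auto simp: powr_mult[symmetric])

lemma tensor_level:
  assumes a: "\<alpha> \<longlonglongrightarrow> 0" and b: "\<beta> \<longlonglongrightarrow> 0" and t: "t > 0" and p: "p > 0"
  shows "{n. t < norm (tensor \<alpha> \<beta> n) powr p}
      = {..< card {(i, j). t < norm (\<alpha> i) powr p * norm (\<beta> j) powr p}}"
proof -
  have nx: "nullf (xprod \<alpha> \<beta>)" by (rule nullf_xprod[OF a b])
  have s: "t powr (1/p) > 0" using t by simp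
  have "{n. t < norm (tensor \<alpha> \<beta> n) powr p} = {n. t powr (1/p) < norm (tensor \<alpha> \<beta> n)}"
    using powr_level[OF t p] by auto
  also have "\<dots> = {n. t powr (1/p) < decr_rearr (xprod \<alpha> \<beta>) n}"
    using fun_cong[OF tensor_norm[OF nx]] by simp
  also have "\<dots> = {..< card {d. t powr (1/p) < xprod \<alpha> \<beta> d}}"
    by (rule decr_level[OF nx s])
  finally show ?thesis unfolding xprod_level[OF t p] .
qed

lemma nullf_tensor:
  assumes a: "\<alpha> \<longlonglongrightarrow> 0" and b: "\<beta> \<longlonglongrightarrow> 0" and p: "p > 0"
  shows "nullf (\<lambda>n. norm (tensor \<alpha> \<beta> n) powr p)"
  unfolding nullf_def using tensor_level[OF a b _ p] by simp

lemma double_fin: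
  fixes c d y z :: "nat \<Rightarrow> real"
  assumes fD: "finite {(i, j). t < y i * z j}" and t: "t > 0"
    and c: "\<And>n. 0 \<le> c n" and d: "\<And>n. 0 \<le> d n"
  shows "(\<Sum>i. \<Sum>j. ennreal (c i * d j) * indicator {0<..<y i * z j} t)
       = ennreal (\<Sum>(i, j)\<in>{(i, j). t < y i * z j}. c i * d j)"
proof -
  let ?D = "{(i, j). t < y i * z j}"
  have eqJ: "{j. t < y i * z j} = Pair i -` ?D" for i by auto
  have fJ: "finite {j. t < y i * z j}" for i
    unfolding eqJ by (rule finite_vimageI[OF fD]) (simp add: inj_on_def)
  have inner: "(\<Sum>j. ennreal (c i * d j) * indicator {0<..<y i * z j} t)
      = ennreal (\<Sum>j\<in>{j. t < y i * z j}. c i * d j)" for i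
    using sum_ind_fin[OF fJ t, of "\<lambda>j. c i * d j"] c d by (simp add: mult_nonneg_nonneg)
  have "(\<Sum>i. \<Sum>j. ennreal (c i * d j) * indicator {0<..<y i * z j} t)
      = (\<Sum>i. ennreal (\<Sum>j\<in>{j. t < y i * z j}. c i * d j))"
    using inner by simp
  also have "\<dots> = (\<Sum>i\<in>fst ` ?D. ennreal (\<Sum>j\<in>{j. t < y i * z j}. c i * d j))"
  proof (rule suminf_finite)
    show "finite (fst ` ?D)" using fD by simp
    fix i assume "i \<notin> fst ` ?D"
    then have "{j. t < y i * z j} = {}" by force
    then show "ennreal (\<Sum>j\<in>{j. t < y i * z j}. c i * d j) = 0" by simp
  qed
  also have "\<dots> = ennreal (\<Sum>i\<in>fst ` ?D. \<Sum>j\<in>{j. t < y i * z j}. c i * d j)"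
    using c d by (intro sum_ennreal) (auto intro!: sum_nonneg mult_nonneg_nonneg)
  also have "(\<Sum>i\<in>fst ` ?D. \<Sum>j\<in>{j. t < y i * z j}. c i * d j) = (\<Sum>(i, j)\<in>Sigma (fst ` ?D) (\<lambda>i. {j. t < y i * z j}). c i * d j)"
    using fD fJ by (intro sum.Sigma) auto
  also have "Sigma (fst ` ?D) (\<lambda>i. {j. t < y i * z j}) = ?D" by force
  finally show ?thesis .
qed

lemma Aset_notin: "i \<notin> Aset g i" unfolding Aset_def by auto

context wseq begin

lemma E3:
  fixes C :: real
  assumes a: "\<alpha> \<longlonglongrightarrow> 0" and b: "\<beta> \<longlonglongrightarrow> 0" and p: "p > 0" and C: "C > 0"
    and mult: "\<forall>m\<ge>1. \<forall>n\<ge>1. w (m * n) \<le> C * w m * w n"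
  shows "Lam w (\<lambda>n. norm (tensor \<alpha> \<beta> n) powr p)
    \<le> ennreal C * (\<Sum>i. ennreal (w (Suc (rk (\<lambda>i. norm (\<alpha> i) powr p) i)) * norm (\<alpha> i) powr p))
                 * (\<Sum>j. ennreal (w (Suc (rk (\<lambda>j. norm (\<beta> j) powr p) j)) * norm (\<beta> j) powr p))"
proof -
  define A where "A = (\<lambda>i. norm (\<alpha> i) powr p)"
  define B where "B = (\<lambda>j. norm (\<beta> j) powr p)"
  define u where "u = (\<lambda>i. C * w (Suc (rk A i)))"
  define v where "v = (\<lambda>j. w (Suc (rk B j)))"
  have nA: "nullf A" unfolding A_def by (rule nullf_pow[OF a p])
  have nB: "nullf B" unfolding B_def by (rule nullf_pow[OF b p])
  have A0: "0 \<le> A i" for i unfolding A_def by simp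
  have B0: "0 \<le> B i" for i unfolding B_def by simp
  have u0: "0 \<le> u i" for i unfolding u_def using C wnn by simp
  have v0: "0 \<le> v i" for i unfolding v_def using wnn by simp
  have r1: "ennreal C * (\<Sum>i. ennreal (w (Suc (rk A i)) * A i)) = (\<Sum>i. ennreal (u i * A i))"
    unfolding ennreal_suminf_cmult[symmetric]
  proof (rule suminf_cong)
    fix i
    have "ennreal (C * (w (Suc (rk A i)) * A i)) = ennreal C * ennreal (w (Suc (rk A i)) * A i)"
      using C wnn[of "rk A i"] A0[of i] by (intro ennreal_mult) auto
    then show "ennreal C * ennreal (w (Suc (rk A i)) * A i) = ennreal (u i * A i)"
      unfolding u_def by (simp only: mult.assoc)
  qed
  have r2: "(\<Sum>i. ennreal (u i * A i)) * (\<Sum>j. ennreal (v j * B j)) = (\<Sum>i. \<Sum>j. ennreal (u i * v j * (A i * B j)))"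
    unfolding ennreal_suminf_multc[symmetric]
  proof (rule suminf_cong)
    fix i
    show "ennreal (u i * A i) * (\<Sum>j. ennreal (v j * B j)) = (\<Sum>j. ennreal (u i * v j * (A i * B j)))"
      unfolding ennreal_suminf_cmult[symmetric]
    proof (rule suminf_cong)
      fix j
      have "ennreal ((u i * A i) * (v j * B j)) = ennreal (u i * A i) * ennreal (v j * B j)"
        using u0[of i] v0[of j] A0[of i] B0[of j] by (intro ennreal_mult) auto
      moreover have "(u i * A i) * (v j * B j) = u i * v j * (A i * B j)" by (simp only: ac_simps)
      ultimately show "ennreal (u i * A i) * ennreal (v j * B j) = ennreal (u i * v j * (A i * B j))" by simp
    qed
  qed
  have "ennreal C * (\<Sum>i. ennreal (w (Suc (rk A i)) * A i)) * (\<Sum>j. ennreal (w (Suc (rk B j)) * B j))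
      = (\<Sum>i. \<Sum>j. ennreal (u i * v j * (A i * B j)))"
    using r1 r2 unfolding v_def by simp
  also have "\<dots> = (\<integral>\<^sup>+t. (\<Sum>i. \<Sum>j. ennreal (u i * v j) * indicator {0<..<A i * B j} t) \<partial>lborel)"
    by (rule layer2[OF u0 v0])
  finally have R: "ennreal C * (\<Sum>i. ennreal (w (Suc (rk A i)) * A i)) * (\<Sum>j. ennreal (w (Suc (rk B j)) * B j))
     = (\<integral>\<^sup>+t. (\<Sum>i. \<Sum>j. ennreal (u i * v j) * indicator {0<..<A i * B j} t) \<partial>lborel)" .
  have "Lam w (\<lambda>n. norm (tensor \<alpha> \<beta> n) powr p)
     \<le> (\<integral>\<^sup>+t. (\<Sum>i. \<Sum>j. ennreal (u i * v j) * indicator {0<..<A i * B j} t) \<partial>lborel)"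
    unfolding Lam_def
  proof (rule nn_integral_mono)
    fix t :: real
    show "indicator {0<..} t * ennreal (WW w (card {n. t < norm (tensor \<alpha> \<beta> n) powr p}))
        \<le> (\<Sum>i. \<Sum>j. ennreal (u i * v j) * indicator {0<..<A i * B j} t)"
    proof (cases "t > 0")
      case False then show ?thesis by simp
    next
      case True
      let ?D = "{(i, j). t < A i * B j}"
      have cardeq: "card {n. t < norm (tensor \<alpha> \<beta> n) powr p} = card ?D"
        using tensor_level[OF a b True p] unfolding A_def B_def by simp
      have fD: "finite ?D"
      proof -
        have "finite {d. t powr (1/p) < xprod \<alpha> \<beta> d}"
          using nullf_xprod[OF a b] True unfolding nullf_def by simp
        then show ?thesis using xprod_level[OF True p] unfolding A_def B_def by simp
      qed
      define \<kappa> where "\<kappa> = (\<lambda>(i, j). Suc (rk A i) * Suc (rk B j))"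
      have "WW w (card ?D) \<le> (\<Sum>d\<in>?D. w (\<kappa> d))"
      proof (rule L2[OF fD])
        show "1 \<le> \<kappa> d" for d unfolding \<kappa>_def by (auto split: prod.splits)
        fix d assume dD: "d \<in> ?D"
        obtain i j where d: "d = (i, j)" by (cases d)
        have tij: "t < A i * B j" using dD d by simp
        have Ai: "0 < A i"
        proof (rule ccontr)
          assume "\<not> 0 < A i" then have "A i = 0" using A0[of i] by simp
          then show False using tij True by simp
        qed
        have Bj: "0 < B j"
        proof (rule ccontr)
          assume "\<not> 0 < B j" then have "B j = 0" using B0[of j] by simp
          then show False using tij True by simp
        qed
        define P where "P = (insert i (Aset A i)) \<times> (insert j (Aset B j)) - {(i, j)}"
        have fA: "finite (Aset A i)" by (rule Aset_fin[OF nA Ai])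
        have fB: "finite (Aset B j)" by (rule Aset_fin[OF nB Bj])
        have cX: "card (insert i (Aset A i) \<times> insert j (Aset B j)) = Suc (rk A i) * Suc (rk B j)"
          unfolding card_cartesian_product
          using fA fB Aset_notin[of i A] Aset_notin[of j B] rk_card[OF nA Ai] rk_card[OF nB Bj] by simp
        have cP: "card P = Suc (rk A i) * Suc (rk B j) - 1"
          unfolding P_def using card_Diff_singleton[of "(i, j)" "insert i (Aset A i) \<times> insert j (Aset B j)"] cX
          by (simp only:) simp
        have PS: "P \<subseteq> {e\<in>?D. \<kappa> e < \<kappa> d}"
        proof
          fix e assume eP: "e \<in> P"
          obtain k l where e: "e = (k, l)" by (cases e)
          have k: "k = i \<or> k \<in> Aset A i" and l: "l = j \<or> l \<in> Aset B j" and ne: "(k, l) \<noteq> (i, j)"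
            using eP e unfolding P_def by auto
          have Ak: "A i \<le> A k" using k Aset_ge[of k A i] by auto
          have Bl: "B j \<le> B l" using l Aset_ge[of l B j] by auto
          have "A i * B j \<le> A k * B l" using Ak Bl A0 B0 by (intro mult_mono) auto
          then have eD: "e \<in> ?D" using tij e by simp
          have rk1: "rk A k \<le> rk A i" using k rk_less[OF nA Ai, of k] by auto
          have rk2: "rk B l \<le> rk B j" using l rk_less[OF nB Bj, of l] by auto
          have strict: "rk A k < rk A i \<or> rk B l < rk B j"
            using k l ne rk_less[OF nA Ai, of k] rk_less[OF nB Bj, of l] by auto
          have "Suc (rk A k) * Suc (rk B l) < Suc (rk A i) * Suc (rk B j)"
          proof (cases "rk A k < rk A i")
            case True
            then show ?thesis using rk2 by (intro mult_less_le_imp_less) auto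
          next
            case False
            then have "rk B l < rk B j" using strict by simp
            then show ?thesis using rk1 by (intro mult_le_less_imp_less) auto
          qed
          then show "e \<in> {e\<in>?D. \<kappa> e < \<kappa> d}" using eD e d unfolding \<kappa>_def by simp
        qed
        have "card P \<le> card {e\<in>?D. \<kappa> e < \<kappa> d}"
          by (rule card_mono[OF _ PS]) (use fD in simp)
        then show "\<kappa> d \<le> card {e\<in>?D. \<kappa> e < \<kappa> d} + 1" using cP d unfolding \<kappa>_def by simp
      qed
      also have "\<dots> \<le> (\<Sum>(i, j)\<in>?D. u i * v j)"
      proof (rule sum_mono)
        fix d assume "d \<in> ?D"
        obtain i j where d: "d = (i, j)" by (cases d)
        have "w (Suc (rk A i) * Suc (rk B j)) \<le> C * w (Suc (rk A i)) * w (Suc (rk B j))"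
          by (rule mult[rule_format]) auto
        then show "w (\<kappa> d) \<le> (case d of (i, j) \<Rightarrow> u i * v j)"
          unfolding \<kappa>_def u_def v_def d by simp
      qed
      finally have le: "WW w (card ?D) \<le> (\<Sum>(i, j)\<in>?D. u i * v j)" .
      have "(\<Sum>i. \<Sum>j. ennreal (u i * v j) * indicator {0<..<A i * B j} t) = ennreal (\<Sum>(i, j)\<in>?D. u i * v j)"
        by (rule double_fin[OF fD True u0 v0])
      then show ?thesis using le True cardeq by (simp add: ennreal_leI)
    qed
  qed
  then show ?thesis using R unfolding A_def B_def by simp
qed

lemma tensor_bound:
  fixes C :: real
  assumes ns: "\<not> summable (\<lambda>n. w (Suc n))" and p: "p > 0" and C: "C > 0"
    and mult: "\<forall>m\<ge>1. \<forall>n\<ge>1. w (m * n) \<le> C * w m * w n"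
    and LA: "\<alpha> \<in> lorentz_space w p" and LB: "\<beta> \<in> lorentz_space w p"
  shows "lorentz_pow w p (tensor \<alpha> \<beta>) \<le> ennreal C * lorentz_pow w p \<alpha> * lorentz_pow w p \<beta>"
proof -
  have a: "\<alpha> \<longlonglongrightarrow> 0" by (rule P1[OF ns p LA])
  have b: "\<beta> \<longlonglongrightarrow> 0" by (rule P1[OF ns p LB])
  have "lorentz_pow w p (tensor \<alpha> \<beta>) \<le> Lam w (\<lambda>n. norm (tensor \<alpha> \<beta> n) powr p)"
    by (rule pow_le_Lam[OF nullf_tensor[OF a b p]])
  also have "\<dots> \<le> ennreal C * (\<Sum>i. ennreal (w (Suc (rk (\<lambda>i. norm (\<alpha> i) powr p) i)) * norm (\<alpha> i) powr p))
                 * (\<Sum>j. ennreal (w (Suc (rk (\<lambda>j. norm (\<beta> j) powr p) j)) * norm (\<beta> j) powr p))"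
    by (rule E3[OF a b p C mult])
  also have "\<dots> \<le> ennreal C * lorentz_pow w p \<alpha> * lorentz_pow w p \<beta>"
    by (intro mult_mono rksum_le_pow nullf_pow a b p) auto
  finally show ?thesis .
qed

end


definition e1 :: "nat \<Rightarrow> complex" where "e1 = (\<lambda>n. if n = 0 then 1 else 0)"

lemma e1_null: "e1 \<longlonglongrightarrow> 0"
  unfolding LIMSEQ_iff e1_def by (intro allI impI exI[of _ 1]) auto

lemma star_le_tensor:
  assumes a: "\<alpha> \<longlonglongrightarrow> 0"
  shows "star \<alpha> n \<le> star (tensor \<alpha> e1) n"
proof -
  have nx: "nullf (xprod \<alpha> e1)" by (rule nullf_xprod[OF a e1_null])
  have st: "star (tensor \<alpha> e1) = decr_rearr (decr_rearr (xprod \<alpha> e1))"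
    unfolding star_def tensor_norm[OF nx] ..
  show ?thesis unfolding st unfolding star_def
  proof (rule decr_mono[OF nullf_norm[OF a] decr_nullf[OF nx]])
    fix s :: real assume s: "s > 0"
    have "card {i. s < norm (\<alpha> i)} \<le> card {d. s < xprod \<alpha> e1 d}"
    proof (rule card_inj_on_le[of "\<lambda>i. (i, 0)"])
      show "inj_on (\<lambda>i. (i, 0::nat)) {i. s < norm (\<alpha> i)}" by (simp add: inj_on_def)
      show "(\<lambda>i. (i, 0)) ` {i. s < norm (\<alpha> i)} \<subseteq> {d. s < xprod \<alpha> e1 d}"
        by (auto simp: xprod_def e1_def)
      show "finite {d. s < xprod \<alpha> e1 d}" using nx s unfolding nullf_def by simp
    qed
    then show "card {i. s < norm (\<alpha> i)} \<le> card {j. s < decr_rearr (xprod \<alpha> e1) j}"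
      using decr_card[OF nx s] by simp
  qed
qed

context wseq begin

lemma e1_in:
  assumes w1: "w 1 = 1"
  shows "e1 \<in> lorentz_space w p"
proof -
  have "lorentz_pow w p e1 \<le> 1" unfolding lorentz_pow_def
  proof (rule SUP_least)
    fix \<pi> :: "nat \<Rightarrow> nat" assume "\<pi> \<in> {\<pi>. bij \<pi>}"
    then have bp: "bij \<pi>" by simp
    let ?k = "inv \<pi> 0"
    have pk: "\<pi> ?k = 0" using bp by (simp add: bij_def surj_f_inv_f)
    have "(\<Sum>n. ennreal (w (Suc n) * norm (e1 (\<pi> n)) powr p)) = (\<Sum>n\<in>{?k}. ennreal (w (Suc n) * norm (e1 (\<pi> n)) powr p))"
    proof (rule suminf_finite)
      fix n assume "n \<notin> {?k}"
      then have "\<pi> n \<noteq> 0" using bp pk by (metis bij_is_inj injD singletonI)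
      then show "ennreal (w (Suc n) * norm (e1 (\<pi> n)) powr p) = 0" by (simp add: e1_def)
    qed simp
    also have "\<dots> = ennreal (w (Suc ?k))" using pk by (simp add: e1_def)
    also have "\<dots> \<le> 1" using wanti[of 1 "Suc ?k"] w1 by (simp add: ennreal_le_1)
    finally show "(\<Sum>n. ennreal (w (Suc n) * norm (e1 (\<pi> n)) powr p)) \<le> 1" .
  qed
  then show ?thesis unfolding lorentz_space_def by (auto intro: le_less_trans)
qed

end

lemma wseq_of: "weight_seq w \<Longrightarrow> wseq w"
  unfolding weight_seq_def by unfold_locales auto

theorem theorem2p10:
  fixes w :: "nat \<Rightarrow> real" and C :: real
  assumes "weight_seq w"
    and "C > 0"
    and "\<forall>m\<ge>1. \<forall>n\<ge>1. w (m * n) \<le> C * w m * w n"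
  shows "\<forall>p::real. p \<ge> 1 \<longrightarrow>
           (\<forall>\<alpha>\<in>lorentz_space w p. \<forall>\<beta>\<in>lorentz_space w p.
              tensor \<alpha> \<beta> \<in> lorentz_space w p \<and>
              lorentz_norm w p (tensor \<alpha> \<beta>)
                \<le> C powr (1 / p) * lorentz_norm w p \<alpha> * lorentz_norm w p \<beta>)
           \<and> stable_calkin (lorentz_space w p)"
proof (intro allI impI conjI ballI)
  interpret wseq w by (rule wseq_of[OF assms(1)])
  have ns: "\<not> summable (\<lambda>n. w (Suc n))" and w1: "w 1 = 1"
    using assms(1) unfolding weight_seq_def by auto
  fix p :: real assume p1: "1 \<le> p"
  then have p: "p > 0" by simp
  let ?L = "lorentz_space w p"
  have tin: "tensor \<alpha> \<beta> \<in> ?L" if A: "\<alpha> \<in> ?L" and B: "\<beta> \<in> ?L" for \<alpha> \<beta>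
  proof -
    have tb: "lorentz_pow w p (tensor \<alpha> \<beta>) \<le> ennreal C * lorentz_pow w p \<alpha> * lorentz_pow w p \<beta>"
      by (rule tensor_bound[OF ns p assms(2) assms(3) A B])
    have fa: "lorentz_pow w p \<alpha> < \<infinity>" and fb: "lorentz_pow w p \<beta> < \<infinity>"
      using A B unfolding lorentz_space_def by auto
    have ft: "lorentz_pow w p (tensor \<alpha> \<beta>) < \<infinity>"
      using tb fa fb by (auto simp: ennreal_mult_less_top intro: le_less_trans)
    then show "tensor \<alpha> \<beta> \<in> ?L" unfolding lorentz_space_def by simp
  qed
  {
    fix \<alpha> \<beta> assume A: "\<alpha> \<in> ?L" and B: "\<beta> \<in> ?L"
    have tb: "lorentz_pow w p (tensor \<alpha> \<beta>) \<le> ennreal C * lorentz_pow w p \<alpha> * lorentz_pow w p \<beta>"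
      by (rule tensor_bound[OF ns p assms(2) assms(3) A B])
    have fa: "lorentz_pow w p \<alpha> < \<infinity>" and fb: "lorentz_pow w p \<beta> < \<infinity>"
      using A B unfolding lorentz_space_def by auto
    have ft: "lorentz_pow w p (tensor \<alpha> \<beta>) < \<infinity>"
      using tb fa fb by (auto simp: ennreal_mult_less_top intro: le_less_trans)
    then show "tensor \<alpha> \<beta> \<in> ?L" unfolding lorentz_space_def by simp
    define a where "a = enn2real (lorentz_pow w p \<alpha>)"
    define b where "b = enn2real (lorentz_pow w p \<beta>)"
    have a0: "0 \<le> a" and b0: "0 \<le> b" unfolding a_def b_def by auto
    have ea: "lorentz_pow w p \<alpha> = ennreal a" unfolding a_def using fa by (simp add: ennreal_enn2real)
    have eb: "lorentz_pow w p \<beta> = ennreal b" unfolding b_def using fb by (simp add: ennreal_enn2real)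
    have "lorentz_pow w p (tensor \<alpha> \<beta>) \<le> ennreal (C * a * b)"
      using tb unfolding ea eb using assms(2) a0 b0 by (simp add: ennreal_mult)
    then have le: "enn2real (lorentz_pow w p (tensor \<alpha> \<beta>)) \<le> C * a * b"
      using assms(2) a0 b0 by (intro enn2real_leI) auto
    have "lorentz_norm w p (tensor \<alpha> \<beta>) \<le> (C * a * b) powr (1 / p)"
      unfolding lorentz_norm_def using le p by (intro powr_mono2) auto
    also have "\<dots> = C powr (1 / p) * a powr (1 / p) * b powr (1 / p)"
      using assms(2) a0 b0 by (simp add: powr_mult)
    also have "\<dots> = C powr (1 / p) * lorentz_norm w p \<alpha> * lorentz_norm w p \<beta>"
      unfolding lorentz_norm_def a_def b_def ..
    finally show "lorentz_norm w p (tensor \<alpha> \<beta>) \<le> C powr (1 / p) * lorentz_norm w p \<alpha> * lorentz_norm w p \<beta>" .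
  }
  have cal: "calkin_space ?L"
    unfolding calkin_space_def
  proof (intro conjI ballI allI impI)
    show "?L \<subseteq> null_seqs" unfolding null_seqs_def using P1[OF ns p] by auto
    show "(\<lambda>n. 0) \<in> ?L" by (rule zero_in)
    show "(\<lambda>n. \<alpha> n + \<beta> n) \<in> ?L" if "\<alpha> \<in> ?L" "\<beta> \<in> ?L" for \<alpha> \<beta> using add_closed[OF p that] .
    show "(\<lambda>n. c * \<alpha> n) \<in> ?L" if "\<alpha> \<in> ?L" for c \<alpha> using smul_closed[OF p that] .
    fix \<alpha> \<beta> assume "\<alpha> \<in> ?L" "\<beta> \<in> null_seqs" "\<forall>n. star \<beta> n \<le> star \<alpha> n"
    then show "\<beta> \<in> ?L" using solid[OF ns p] unfolding null_seqs_def by auto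
  qed
  show "stable_calkin ?L"
    unfolding stable_calkin_def
  proof (intro conjI cal equalityI)
    let ?S = "{tensor \<alpha> \<beta> |\<alpha> \<beta>. \<alpha> \<in> ?L \<and> \<beta> \<in> ?L}"
    show "calkin_hull ?S \<subseteq> ?L" unfolding calkin_hull_def
      using cal tin by (intro Inter_lower) auto
    show "?L \<subseteq> calkin_hull ?S" unfolding calkin_hull_def
    proof (intro subsetI InterI)
      fix \<alpha> J assume A: "\<alpha> \<in> ?L" and J: "J \<in> {J. calkin_space J \<and> ?S \<subseteq> J}"
      have "tensor \<alpha> e1 \<in> ?S" using A e1_in[OF w1] by blast
      then have tJ: "tensor \<alpha> e1 \<in> J" using J by auto
      have a: "\<alpha> \<longlonglongrightarrow> 0" by (rule P1[OF ns p A])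
      have "\<forall>n. star \<alpha> n \<le> star (tensor \<alpha> e1) n" using star_le_tensor[OF a] by simp
      then show "\<alpha> \<in> J" using J tJ a unfolding calkin_space_def null_seqs_def by auto
    qed
  qed
qed


end
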